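(* Let $B>0$ and for $t>0$, $x>0$ define $$\tilde{y}_{2}(t,x)=\frac{2(Bt)^{1/4}}{\pi}\int_{0}^{\infty}\frac{e^{-w^{4}}}{w^{2}}\left(\int_{0}^{w^{4}}e^{s}s^{-1/2}\,ds\right)\cos\!\Big(\frac{x}{(Bt)^{1/4}}w\Big)\,dw.$$ Then $\tilde{y}_{2}(t,x)\to0$ as $x\to\infty$ for each fixed $t>0$, and $\tilde{y}_{2}(t,x)\to0$ as $t\to0$ for each fixed $x>0$. *)

theory Defs
  imports "HOL-Analysis.Analysis"
begin

text \<open>Integrals are Henstock-Kurzweil
  integrals (the integrands are absolutely integrable, so these agree with the
  Lebesgue/improper integrals of the paper).\<close>
definition y2tilde :: "real \<Rightarrow> real \<Rightarrow> real \<Rightarrow> real" where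
  "y2tilde B t x =
     2 * (B * t) powr (1/4) / pi *
     integral {0..} (\<lambda>w. exp (-(w ^ 4)) / w ^ 2
        * integral {0..w ^ 4} (\<lambda>s. exp s * s powr (-1/2))
        * cos (x / (B * t) powr (1/4) * w))"

end

theory Submission
  imports Defs
begin

lemma P_has_int: "((\<lambda>v::real. v powr (-1/2)) has_integral 2) {0..1}"
  using has_integral_powr_from_0[of "-1/2" 1] by simp

lemma mono_prod_int:
  fixes f g :: "real \<Rightarrow> real"
  assumes "f integrable_on {a..b}" "a \<le> b"
    and "\<And>x y. \<lbrakk>a \<le> x; x \<le> y; y \<le> b\<rbrakk> \<Longrightarrow> g x \<le> g y"
  shows "(\<lambda>x. g x * f x) integrable_on {a..b}"
proof -
  obtain c where "c \<in> {a..b}"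
    and "((\<lambda>x. g x * f x) has_integral (g a * integral {a..c} f + g b * integral {c..b} f)) {a..b}"
    using second_mean_value_theorem_full[where g=g, OF assms] by blast
  then show ?thesis unfolding integrable_on_def by blast
qed

definition phi :: "real \<Rightarrow> real" where
  "phi w = integral {0..1} (\<lambda>v. exp (-(w^4)*(1-v)) * v powr (-1/2))"

lemma phi_integrable: "(\<lambda>v::real. exp (-((w::real)^4)*(1-v)) * v powr (-1/2)) integrable_on {0..1}"
proof (rule mono_prod_int)
  show "(\<lambda>v::real. v powr (-1/2)) integrable_on {0..1}"
    using P_has_int integrable_on_def by blast
  fix x y :: real assume "0 \<le> x" "x \<le> y" "y \<le> 1"
  moreover have "0 \<le> w^4" by simp
  ultimately show "exp (-(w^4)*(1-x)) \<le> exp (-(w^4)*(1-y))"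
    by (simp add: mult_left_mono)
qed simp

lemma phi_nonneg: "0 \<le> phi w"
  unfolding phi_def by (rule integral_nonneg[OF phi_integrable]) simp

lemma phi0: "phi 0 = 2"
  unfolding phi_def using P_has_int by (simp add: integral_unique)

lemma phi_mono:
  assumes "0 \<le> w1" "w1 \<le> w2"
  shows "phi w2 \<le> phi w1"
  unfolding phi_def
proof (rule integral_le[OF phi_integrable phi_integrable])
  fix v :: real assume v: "v \<in> {0..1}"
  have "w1^4 \<le> w2^4" using assms by (simp add: power_mono)
  then have "-(w2^4)*(1-v) \<le> -(w1^4)*(1-v)" using v by (simp add: mult_right_mono)
  then show "exp (-(w2^4)*(1-v)) * v powr (-1/2) \<le> exp (-(w1^4)*(1-v)) * v powr (-1/2)"
    by (simp add: mult_right_mono)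
qed

lemma phi_eq:
  fixes w :: real
  assumes w: "w > 0"
  shows "exp (-(w^4)) / w^2 * integral {0..w^4} (\<lambda>s. exp s * s powr (-1/2)) = phi w"
proof -
  define u where "u = w^4"
  have u: "u > 0" using w by (simp add: u_def)
  define F where "F = integral {0..u} (\<lambda>s. exp s * s powr (-1/2))"
  have "(\<lambda>s. exp s * s powr (-1/2)) integrable_on {0..u}"
    by (rule mono_prod_int) (use u integrable_on_powr_from_0 in auto)
  then have h1: "((\<lambda>s. exp s * s powr (-1/2)) has_integral F) (cbox 0 u)"
    unfolding F_def by (simp add: integrable_integral)
  have h2: "((\<lambda>v. exp (u *\<^sub>R v + 0) * (u *\<^sub>R v + 0) powr (-1/2)) has_integral (F /\<^sub>R u ^ DIM(real)))
       (cbox ((0 - 0) /\<^sub>R u) ((u - 0) /\<^sub>R u))"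
    by (rule has_integral_affinity'[OF h1 u])
  have h3: "((\<lambda>v. exp (-u) * w^2 * (exp (u * v) * (u * v) powr (-1/2))) has_integral (exp (-u) * w^2 * (F / u))) {0..1}"
  proof -
    have h2': "((\<lambda>v. exp (u * v) * (u * v) powr (-1/2)) has_integral (F / u)) {0..1}"
    proof -
      have e1: "cbox ((0 - 0) /\<^sub>R u) ((u - 0) /\<^sub>R u) = {0..1}" using u by simp
      have e2: "F /\<^sub>R u ^ DIM(real) = F / u" by (simp add: divide_inverse mult.commute)
      have e3: "(\<lambda>v::real. exp (u *\<^sub>R v + 0) * (u *\<^sub>R v + 0) powr (-1/2)) = (\<lambda>v. exp (u * v) * (u * v) powr (-1/2))" by simp
      show ?thesis using h2 by (simp only: e1 e2 e3)
    qed
    show ?thesis by (rule has_integral_mult_right[OF h2'])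
  qed
  have upow: "u powr (-1/2) = 1 / w^2"
  proof -
    have "u powr (-1/2) = (w powr 4) powr (-1/2)" using w by (simp add: u_def powr_realpow)
    also have "\<dots> = w powr (-2)" by (simp add: powr_powr)
    also have "\<dots> = 1 / w^2" using w by (simp add: powr_minus powr_realpow divide_inverse)
    finally show ?thesis .
  qed
  have h4: "((\<lambda>v. exp (-(w^4)*(1-v)) * v powr (-1/2)) has_integral (exp (-u) * w^2 * (F / u))) {0..1}"
  proof (rule has_integral_eq[OF _ h3])
    fix v :: real assume v: "v \<in> {0..1}"
    have a: "(u * v) powr (-1/2) = u powr (-1/2) * v powr (-1/2)"
      using u v by (simp add: powr_mult)
    have b: "exp (-(w^4)*(1-v)) = exp (-u) * exp (u * v)"
    proof -
      have "exp (-(w^4)*(1-v)) = exp (-u + u * v)" by (rule arg_cong[where f=exp]) (simp add: u_def algebra_simps)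
      then show ?thesis by (simp only: exp_add)
    qed
    have "exp (-u) * w^2 * (exp (u * v) * (u * v) powr (-1/2)) = (exp (-u) * exp (u * v)) * (w^2 * (1/w^2)) * v powr (-1/2)"
      unfolding a upow by (simp add: algebra_simps)
    also have "\<dots> = exp (-(w^4)*(1-v)) * v powr (-1/2)" using w b by simp
    finally show "exp (-u) * w^2 * (exp (u * v) * (u * v) powr (-1/2)) = exp (-(w^4)*(1-v)) * v powr (-1/2)" .
  qed
  have "phi w = exp (-u) * w^2 * (F / u)"
    unfolding phi_def using h4 by (rule integral_unique)
  also have "\<dots> = exp (-(w^4)) / w^2 * F"
  proof -
    have "w^4 = w^2 * w^2" by algebra
    then show ?thesis using w by (simp add: u_def field_simps)
  qed
  finally show ?thesis unfolding F_def u_def by simp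
qed

lemma cos_has_int:
  fixes L a c :: real
  assumes "L > 0" "a \<le> c"
  shows "((\<lambda>w. cos (L*w)) has_integral (sin (L*c) - sin (L*a)) / L) {a..c}"
proof -
  have "((\<lambda>w. cos (L*w)) has_integral (sin (L*c) / L - sin (L*a) / L)) {a..c}"
  proof (rule fundamental_theorem_of_calculus[OF assms(2)])
    fix x assume "x \<in> {a..c}"
    have "((\<lambda>x. sin (L*x) / L) has_real_derivative (cos (L*x) * (L * 1) / L)) (at x within {a..c})"
      by (auto intro!: derivative_eq_intros)
    then show "((\<lambda>x. sin (L*x) / L) has_vector_derivative cos (L*x)) (at x within {a..c})"
      using assms by (simp add: has_real_derivative_iff_has_vector_derivative)
  qed
  then show ?thesis by (simp add: diff_divide_distrib)
qed

lemma cos_int_bound: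
  fixes L a c :: real
  assumes "L > 0" "a \<le> c"
  shows "\<bar>integral {a..c} (\<lambda>w. cos (L*w))\<bar> \<le> 2 / L"
proof -
  have "integral {a..c} (\<lambda>w. cos (L*w)) = (sin (L*c) - sin (L*a)) / L"
    using cos_has_int[OF assms] by (rule integral_unique)
  moreover have "\<bar>sin (L*c) - sin (L*a)\<bar> \<le> 2"
    using abs_sin_le_one[of "L*c"] abs_sin_le_one[of "L*a"] by linarith
  ultimately show ?thesis using assms by (simp add: abs_divide divide_right_mono)
qed

lemma phi_le2: "0 \<le> w \<Longrightarrow> \<bar>phi w\<bar> \<le> 2"
  using phi_mono[of 0 w] phi0 phi_nonneg[of w] by simp

lemma fin_part:
  fixes L b :: real
  assumes L: "L > 0" and b: "b \<ge> 0"
  shows "\<exists>J. ((\<lambda>w. exp (-(w ^ 4)) / w ^ 2 * integral {0..w ^ 4} (\<lambda>s. exp s * s powr (-1/2))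
        * cos (L * w)) has_integral J) {0..b} \<and> \<bar>J\<bar> \<le> 8 / L"
proof -
  have cint: "(\<lambda>w. cos (L*w)) integrable_on {0..b}"
    by (intro integrable_continuous_interval continuous_intros)
  obtain c where c: "c \<in> {0..b}" and hi: "((\<lambda>w. (- phi w) * cos (L*w)) has_integral
      (- phi 0 * integral {0..c} (\<lambda>w. cos (L*w)) + - phi b * integral {c..b} (\<lambda>w. cos (L*w)))) {0..b}"
  proof (rule second_mean_value_theorem_full[where g="\<lambda>w. - phi w", OF cint b])
    fix x y :: real assume "0 \<le> x" "x \<le> y" "y \<le> b"
    then show "- phi x \<le> - phi y" using phi_mono by simp
  qed
  define J where "J = phi 0 * integral {0..c} (\<lambda>w. cos (L*w)) + phi b * integral {c..b} (\<lambda>w. cos (L*w))"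
  have hj: "((\<lambda>w. phi w * cos (L*w)) has_integral J) {0..b}"
    using has_integral_neg[OF hi] unfolding J_def by (simp add: add.commute)
  have "((\<lambda>w. exp (-(w ^ 4)) / w ^ 2 * integral {0..w ^ 4} (\<lambda>s. exp s * s powr (-1/2))
        * cos (L * w)) has_integral J) {0..b}"
  proof (rule has_integral_spike_finite[of "{0}", OF _ _ hj])
    fix x assume "x \<in> {0..b} - {0}"
    then have "x > 0" by auto
    then show "exp (-(x ^ 4)) / x ^ 2 * integral {0..x ^ 4} (\<lambda>s. exp s * s powr (-1/2))
        * cos (L * x) = phi x * cos (L*x)" using phi_eq by simp
  qed simp
  moreover have "\<bar>J\<bar> \<le> 8 / L"
  proof -
    have "\<bar>J\<bar> \<le> \<bar>phi 0\<bar> * \<bar>integral {0..c} (\<lambda>w. cos (L*w))\<bar> + \<bar>phi b\<bar> * \<bar>integral {c..b} (\<lambda>w. cos (L*w))\<bar>"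
      unfolding J_def by (metis abs_mult abs_triangle_ineq)
    also have "\<dots> \<le> 2 * (2/L) + 2 * (2/L)"
      using c b L by (intro add_mono mult_mono phi_le2 cos_int_bound) auto
    finally show ?thesis by simp
  qed
  ultimately show ?thesis by blast
qed

lemma inf_part:
  fixes L :: real
  assumes L: "L > 0"
  shows "\<bar>integral {0..} (\<lambda>w. exp (-(w ^ 4)) / w ^ 2 * integral {0..w ^ 4} (\<lambda>s. exp s * s powr (-1/2))
        * cos (L * w))\<bar> \<le> 8 / L"
proof (cases "(\<lambda>w. exp (-(w ^ 4)) / w ^ 2 * integral {0..w ^ 4} (\<lambda>s. exp s * s powr (-1/2))
        * cos (L * w)) integrable_on {0..}")
  case False
  then show ?thesis using L by (simp add: not_integrable_integral)
next
  case True
  define f where "f = (\<lambda>w. exp (-(w ^ 4)) / w ^ 2 * integral {0..w ^ 4} (\<lambda>s. exp s * s powr (-1/2))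
        * cos (L * w))"
  define I where "I = integral {0..} f"
  have hI: "(f has_integral I) {0..}" using True unfolding f_def I_def by (simp add: integrable_integral)
  show ?thesis
  proof (rule ccontr)
    assume "\<not> ?thesis"
    then have gt: "\<bar>I\<bar> > 8 / L" unfolding I_def f_def by simp
    define e where "e = \<bar>I\<bar> - 8 / L"
    have e: "e > 0" using gt by (simp add: e_def)
    obtain BB where BB: "BB > 0" and hB: "\<forall>a b. ball 0 BB \<subseteq> cbox a b \<longrightarrow>
      (\<exists>z. ((\<lambda>x. if x \<in> {0..} then f x else 0) has_integral z) (cbox a b) \<and> norm (z - I) < e)"
      using hI e unfolding has_integral'[of f I] by blast
    have "ball 0 BB \<subseteq> cbox (-BB) BB" by (auto simp: dist_real_def)
    then obtain z where z1: "((\<lambda>x. if x \<in> {0..} then f x else 0) has_integral z) (cbox (-BB) BB)"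
      and z2: "norm (z - I) < e" using hB by blast
    obtain J where J1: "(f has_integral J) {0..BB}" and J2: "\<bar>J\<bar> \<le> 8 / L"
      using fin_part[OF L, of BB] BB unfolding f_def by auto
    have "((\<lambda>x. if x \<in> cbox 0 BB then f x else 0) has_integral J) (cbox (-BB) BB)"
      using J1 BB by (intro has_integral_restrict_closed_subinterval) auto
    then have "((\<lambda>x. if x \<in> {0..} then f x else 0) has_integral J) (cbox (-BB) BB)"
      by (rule has_integral_eq[rotated]) auto
    then have "z = J" using z1 by (rule has_integral_unique[rotated])
    then show False using z2 J2 e_def by (simp add: abs_minus_commute)
  qed
qed

lemma y2_bound:
  assumes B: "B > 0" and t: "t > 0" and x: "x > 0"
  shows "\<bar>y2tilde B t x\<bar> \<le> 16 * ((B*t) powr (1/4))^2 / (pi * x)"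
proof -
  define c where "c = (B*t) powr (1/4)"
  have c: "c > 0" using B t by (simp add: c_def)
  have L: "x / c > 0" using c x by simp
  have "\<bar>y2tilde B t x\<bar> = 2 * c / pi * \<bar>integral {0..} (\<lambda>w. exp (-(w ^ 4)) / w ^ 2
     * integral {0..w ^ 4} (\<lambda>s. exp s * s powr (-1/2)) * cos (x / c * w))\<bar>"
    unfolding y2tilde_def c_def[symmetric] using c by (simp add: abs_mult)
  also have "\<dots> \<le> 2 * c / pi * (8 / (x / c))"
    using inf_part[OF L] c by (intro mult_left_mono) auto
  also have "\<dots> = 16 * c^2 / (pi * x)" using c x by (simp add: field_simps power2_eq_square)
  finally show ?thesis unfolding c_def .
qed

theorem lemma6:
  fixes B :: real
  assumes "B > 0"
  shows "(\<forall>t>0. ((\<lambda>x. y2tilde B t x) \<longlongrightarrow> 0) at_top)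
       \<and> (\<forall>x>0. ((\<lambda>t. y2tilde B t x) \<longlongrightarrow> 0) (at_right 0))"
proof safe
  fix t :: real assume t: "t > 0"
  show "((\<lambda>x. y2tilde B t x) \<longlongrightarrow> 0) at_top"
  proof (rule Lim_null_comparison)
    show "\<forall>\<^sub>F x in at_top. norm (y2tilde B t x) \<le> 16 * ((B*t) powr (1/4))^2 / pi * inverse x"
    proof (rule eventually_mono[OF eventually_gt_at_top[of 0]])
      fix x :: real assume x: "x > 0"
      have "\<bar>y2tilde B t x\<bar> \<le> 16 * ((B*t) powr (1/4))^2 / (pi * x)" using y2_bound[OF assms t x] by blast
      also have "\<dots> = 16 * ((B*t) powr (1/4))^2 / pi * inverse x" by (simp add: field_simps)
      finally show "norm (y2tilde B t x) \<le> 16 * ((B*t) powr (1/4))^2 / pi * inverse x" by simp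
    qed
    show "((\<lambda>x. 16 * ((B*t) powr (1/4))^2 / pi * inverse x) \<longlongrightarrow> 0) at_top"
      by (intro tendsto_mult_right_zero tendsto_inverse_0_at_top filterlim_ident)
  qed
next
  fix x :: real assume x: "x > 0"
  show "((\<lambda>t. y2tilde B t x) \<longlongrightarrow> 0) (at_right 0)"
  proof (rule Lim_null_comparison)
    show "\<forall>\<^sub>F t in at_right 0. norm (y2tilde B t x) \<le> 16 * ((B*t) powr (1/4))^2 / (pi * x)"
    proof (rule eventually_mono[OF eventually_at_right_less[of 0]])
      fix t :: real assume "t > 0"
      then show "norm (y2tilde B t x) \<le> 16 * ((B*t) powr (1/4))^2 / (pi * x)" using y2_bound[OF assms _ x] by simp
    qed
    have "((\<lambda>t. B * t) \<longlongrightarrow> 0) (at_right 0)"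
      by (intro tendsto_mult_right_zero tendsto_ident_at)
    then have "((\<lambda>t. (B*t) powr (1/4)) \<longlongrightarrow> 0) (at_right 0)"
    proof (rule tendsto_zero_powrI[where b="1/4"])
      show "\<forall>\<^sub>F t in at_right 0. 0 \<le> B * t"
        using eventually_at_right_less[of 0] by (rule eventually_mono) (use assms in simp)
    qed auto
    then have "((\<lambda>t. 16 * ((B*t) powr (1/4))^2 / (pi * x)) \<longlongrightarrow> 16 * 0^2 / (pi * x)) (at_right 0)"
      using x by (intro tendsto_intros) auto
    then show "((\<lambda>t. 16 * ((B*t) powr (1/4))^2 / (pi * x)) \<longlongrightarrow> 0) (at_right 0)" by simp
  qed
qed
end
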